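(* Let $p,q\ge 0$ with $p+q=1$ and $p\neq\frac12$. Let $\lambda$ be a continuous (atomless) Borel probability measure on $[0,1]$ whose distribution function $g_\lambda(x)=\lambda([0,x))$ is differentiable on $[0,1]$. Define $f(x)=2px+2q(1-x)$ and $G(x)=x\bigl(x+2q(1-x)\bigr)$, and set $g^{(1)}_\lambda=g_\lambda$ and $g^{(i)}_\lambda=G\circ g^{(i-1)}_\lambda$ for $i\ge 2$. For $n\in\mathbb{N}$ let $f^{(n)}_\lambda(x)=\prod_{i=1}^n f\bigl(g^{(i)}_\lambda(x)\bigr)$, $x\in[0,1]$. Then for every $n\in\mathbb{N}$ the function $f^{(n)}_\lambda:[0,1]\to\mathbb{R}_+$ is increasing if $p>\frac12$ and decreasing if $p<\frac12$.
   Context: The functions $f^{(n)}_\lambda$ are the Radon–Nikodym densities $d(V^n\lambda)/d\lambda$ of the iterates of the quadratic stochastic operator $(V\lambda)(A)=\int\int P(x,y,A)\,d\lambda(x)d\lambda(y)$, where for $x<y$, $P(x,y,\cdot)=q\delta_x+p\delta_y$, $P(y,x,\cdot)=P(x,y,\cdot)$ and $P(x,x,\cdot)=\delta_x$; only the explicit formulas above are needed. *)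

theory Defs
  imports "HOL-Probability.Probability"
begin

definition f_lin :: "real \<Rightarrow> real \<Rightarrow> real \<Rightarrow> real" where
  "f_lin p q x = 2 * p * x + 2 * q * (1 - x)"

definition G_map :: "real \<Rightarrow> real \<Rightarrow> real" where
  "G_map q x = x * (x + 2 * q * (1 - x))"

definition distr_fun :: "real measure \<Rightarrow> real \<Rightarrow> real" where
  "distr_fun M x = measure M {0..<x}"

definition g_iter :: "real \<Rightarrow> real measure \<Rightarrow> nat \<Rightarrow> real \<Rightarrow> real" where
  "g_iter q M i x = (G_map q ^^ (i - 1)) (distr_fun M x)"

definition f_n :: "real \<Rightarrow> real \<Rightarrow> real measure \<Rightarrow> nat \<Rightarrow> real \<Rightarrow> real" where
  "f_n p q M n x = (\<Prod>i=1..n. f_lin p q (g_iter q M i x))"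

end

theory Submission
  imports Defs
begin

lemma G_range: "0 \<le> q \<Longrightarrow> q \<le> 1 \<Longrightarrow> 0 \<le> x \<Longrightarrow> x \<le> 1 \<Longrightarrow> 0 \<le> G_map q x \<and> G_map q x \<le> 1"
  unfolding G_map_def
proof -
  assume a: "0 \<le> q" "q \<le> 1" "0 \<le> x" "x \<le> 1"
  have "x * (x + 2 * q * (1 - x)) \<le> 1"
  proof -
    have "1 - x * (x + 2 * q * (1 - x)) = (1-x)*(1 + x - 2*q*x)" by (simp add: algebra_simps)
    moreover have "0 \<le> (1-x)*(1 + x - 2*q*x)"
    proof -
      have "2*q*x \<le> 2*x" using a by (simp add: mult_right_mono)
      then show ?thesis using a by (intro mult_nonneg_nonneg) auto
    qed
    ultimately show ?thesis by linarith
  qed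
  moreover have "0 \<le> x * (x + 2 * q * (1 - x))" using a by (intro mult_nonneg_nonneg) auto
  ultimately show "0 \<le> x * (x + 2 * q * (1 - x)) \<and> x * (x + 2 * q * (1 - x)) \<le> 1" by simp
qed

lemma G_mono: "0 \<le> q \<Longrightarrow> q \<le> 1 \<Longrightarrow> 0 \<le> x \<Longrightarrow> x \<le> y \<Longrightarrow> y \<le> 1 \<Longrightarrow> G_map q x \<le> G_map q y"
  unfolding G_map_def
proof -
  assume a: "0 \<le> q" "q \<le> 1" "0 \<le> x" "x \<le> y" "y \<le> 1"
  have "y * (y + 2 * q * (1 - y)) - x * (x + 2 * q * (1 - x)) = (y - x) * ((1-2*q)*(x+y) + 2*q)"
    by (simp add: algebra_simps)
  moreover have "0 \<le> (1-2*q)*(x+y) + 2*q"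
  proof (cases "q \<le> 1/2")
    case True then show ?thesis using a by (intro add_nonneg_nonneg mult_nonneg_nonneg) auto
  next
    case False
    have "(2*q-1)*(x+y) \<le> (2*q-1)*2" using a False by (intro mult_left_mono) auto
    then show ?thesis using a by (simp add: algebra_simps)
  qed
  ultimately show "x * (x + 2 * q * (1 - x)) \<le> y * (y + 2 * q * (1 - y))" using a by (metis diff_ge_0_iff_ge mult_nonneg_nonneg)
qed

lemma Giter_range: "0 \<le> q \<Longrightarrow> q \<le> 1 \<Longrightarrow> 0 \<le> x \<Longrightarrow> x \<le> 1 \<Longrightarrow> 0 \<le> (G_map q ^^ k) x \<and> (G_map q ^^ k) x \<le> 1"
  by (induction k) (auto dest: G_range)

lemma Giter_mono: "0 \<le> q \<Longrightarrow> q \<le> 1 \<Longrightarrow> 0 \<le> x \<Longrightarrow> x \<le> y \<Longrightarrow> y \<le> 1 \<Longrightarrow> (G_map q ^^ k) x \<le> (G_map q ^^ k) y"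
proof (induction k)
  case 0 then show ?case by simp
next
  case (Suc k)
  have "0 \<le> (G_map q ^^ k) x" "(G_map q ^^ k) y \<le> 1"
    using Giter_range[of q x k] Giter_range[of q y k] Suc.prems by auto
  then show ?case using Suc G_mono by simp
qed

theorem proposition4p1:
  fixes p q :: real and M :: "real measure" and n :: nat
  assumes "p \<ge> 0" and "q \<ge> 0" and "p + q = 1" and "p \<noteq> 1/2"
    and "prob_space M" and "sets M = sets borel" and "measure M {0..1} = 1"
    and "\<And>x. measure M {x} = 0"
    and "distr_fun M differentiable_on {0..1}"
    and "n \<ge> 1"
  shows "(\<forall>x\<in>{0..1}. f_n p q M n x \<ge> 0)
    \<and> (p > 1/2 \<longrightarrow> mono_on {0..1} (f_n p q M n))
    \<and> (p < 1/2 \<longrightarrow> antimono_on {0..1} (f_n p q M n))"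
proof -
  interpret prob_space M by fact
  have q1: "q \<le> 1" using assms by linarith
  have dr: "0 \<le> distr_fun M x \<and> distr_fun M x \<le> 1" for x
    unfolding distr_fun_def by simp
  have dm: "distr_fun M x \<le> distr_fun M y" if "x \<le> y" for x y
    unfolding distr_fun_def
    by (rule finite_measure_mono) (use that assms(6) in \<open>auto\<close>)
  have gr: "0 \<le> g_iter q M i x \<and> g_iter q M i x \<le> 1" for i x
    unfolding g_iter_def using Giter_range[OF assms(2) q1] dr by blast
  have gm: "g_iter q M i x \<le> g_iter q M i y" if "x \<le> y" for i x y
    unfolding g_iter_def using Giter_mono[OF assms(2) q1] dr dm[OF that] by blast
  have fl: "f_lin p q t = 2*q + 2*(p-q)*t" for t unfolding f_lin_def by (simp add: algebra_simps)
  have fnn: "0 \<le> f_lin p q t" if "0 \<le> t" "t \<le> 1" for t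
  proof -
    have "f_lin p q t = 2*p*t + 2*q*(1-t)" by (simp add: f_lin_def)
    then show ?thesis using that assms by simp
  qed
  have nn: "0 \<le> f_lin p q (g_iter q M i x)" for i x using fnn gr by blast
  have P1: "\<forall>x\<in>{0..1}. f_n p q M n x \<ge> 0"
    unfolding f_n_def using nn by (simp add: prod_nonneg)
  have P2: "mono_on {0..1} (f_n p q M n)" if "p > 1/2"
  proof (rule mono_onI)
    fix x y :: real assume "x \<in> {0..1}" "y \<in> {0..1}" "x \<le> y"
    have "f_lin p q (g_iter q M i x) \<le> f_lin p q (g_iter q M i y)" for i
      unfolding fl using gm[OF \<open>x \<le> y\<close>, of i] that assms(3)
      by (simp add: mult_left_mono)
    then show "f_n p q M n x \<le> f_n p q M n y"
      unfolding f_n_def using nn by (intro prod_mono) auto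
  qed
  have P3: "antimono_on {0..1} (f_n p q M n)" if "p < 1/2"
  proof (rule monotone_onI)
    fix x y :: real assume "x \<in> {0..1}" "y \<in> {0..1}" "x \<le> y"
    have "f_lin p q (g_iter q M i y) \<le> f_lin p q (g_iter q M i x)" for i
      unfolding fl using gm[OF \<open>x \<le> y\<close>, of i] that assms(3)
      by (simp add: mult_left_mono_neg)
    then show "f_n p q M n x \<ge> f_n p q M n y"
      unfolding f_n_def using nn by (intro prod_mono) auto
  qed
  show ?thesis using P1 P2 P3 by blast
qed

end
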